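(* Let $E$ be an acyclic directed graph and let $C\subset E(G(E))$ be an infinite chain (linearly ordered subset with respect to the natural partial order). Then there exists a subgraph $T\subset E$ isomorphic to the unary tree such that $C\subset E(G(T))$.
   Context: A directed graph $E=(E^0,E^1,r,s)$ has vertices $E^0$, edges $E^1$, source/range maps $s,r:E^1\to E^0$; paths are vertices and sequences of edges $e_1\ldots e_n$ with $r(e_i)=s(e_{i+1})$; acyclic means no path of non-zero length with equal source and range. The graph inverse semigroup $G(E)$ is the semigroup with zero $0$ generated by $E^0$, $E^1$, $E^{-1}=\{e^{-1}\mid e\in E^1\}$ subject to: for $a,b\in E^0$, $e,f\in E^1$: $ab=a$ if $a=b$, else $0$; $s(e)e=er(e)=e$; $e^{-1}s(e)=r(e)e^{-1}=e^{-1}$; $e^{-1}f=r(e)$ if $e=f$, else $0$. For a subgraph $T$, $G(T)$ is the subsemigroup of $G(E)$ generated by $T^0\cup T^1\cup T^{-1}$ and $0$. $E(G(E))$ is the set of idempotents, a semilattice under the natural partial order $e\le f$ iff $e=ef=fe$. The unary tree is the graph with vertex set $\omega$ and edges $(n,n+1)$, $n\in\omega$, with source $n$ and range $n+1$. *)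

theory Defs
  imports Main "HOL-Library.Sublist"
begin

text \<open>A path is represented as a pair (v, es): its source vertex v and its
list of edges es (empty list = the vertex v itself, a path of length 0).\<close>

type_synonym ('v,'e) path = "'v \<times> 'e list"

definition graph :: "'v set \<Rightarrow> 'e set \<Rightarrow> ('e \<Rightarrow> 'v) \<Rightarrow> ('e \<Rightarrow> 'v) \<Rightarrow> bool" where
  "graph V Ed src rng \<longleftrightarrow> (\<forall>e\<in>Ed. src e \<in> V \<and> rng e \<in> V)"

definition is_path :: "'v set \<Rightarrow> 'e set \<Rightarrow> ('e \<Rightarrow> 'v) \<Rightarrow> ('e \<Rightarrow> 'v) \<Rightarrow> ('v,'e) path \<Rightarrow> bool" where
  "is_path V Ed src rng p \<longleftrightarrow>
     fst p \<in> V \<and> set (snd p) \<subseteq> Ed \<and>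
     (snd p \<noteq> [] \<longrightarrow> src (hd (snd p)) = fst p) \<and>
     (\<forall>i. Suc i < length (snd p) \<longrightarrow> rng (snd p ! i) = src (snd p ! Suc i))"

definition path_rng :: "('e \<Rightarrow> 'v) \<Rightarrow> ('v,'e) path \<Rightarrow> 'v" where
  "path_rng rng p = (if snd p = [] then fst p else rng (last (snd p)))"

definition acyclic_graph :: "'v set \<Rightarrow> 'e set \<Rightarrow> ('e \<Rightarrow> 'v) \<Rightarrow> ('e \<Rightarrow> 'v) \<Rightarrow> bool" where
  "acyclic_graph V Ed src rng \<longleftrightarrow>
     (\<forall>p. is_path V Ed src rng p \<and> snd p \<noteq> [] \<longrightarrow> fst p \<noteq> path_rng rng p)"

text \<open>Elements of the graph inverse semigroup in their standard normal form:
zero, or p q^-1 with p, q paths with r(p) = r(q).\<close>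

datatype ('v,'e) gis = Zero | PQ "('v,'e) path" "('v,'e) path"

definition gis_carrier :: "'v set \<Rightarrow> 'e set \<Rightarrow> ('e \<Rightarrow> 'v) \<Rightarrow> ('e \<Rightarrow> 'v) \<Rightarrow> ('v,'e) gis set" where
  "gis_carrier V Ed src rng = insert Zero
     {PQ p q | p q. is_path V Ed src rng p \<and> is_path V Ed src rng q \<and> path_rng rng p = path_rng rng q}"

text \<open>Multiplication: (p q^-1)(r s^-1) = p r' s^-1 if r = q r', = p (s q')^-1 if q = r q', else 0.\<close>

fun gis_mult :: "('v,'e) gis \<Rightarrow> ('v,'e) gis \<Rightarrow> ('v,'e) gis" where
  "gis_mult Zero _ = Zero"
| "gis_mult _ Zero = Zero"
| "gis_mult (PQ p q) (PQ r s) =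
     (if fst q = fst r \<and> prefix (snd q) (snd r)
      then PQ (fst p, snd p @ drop (length (snd q)) (snd r)) s
      else if fst q = fst r \<and> prefix (snd r) (snd q)
      then PQ p (fst s, snd s @ drop (length (snd r)) (snd q))
      else Zero)"

definition gis_vertex :: "'v \<Rightarrow> ('v,'e) gis" where
  "gis_vertex v = PQ (v, []) (v, [])"

definition gis_edge :: "('e \<Rightarrow> 'v) \<Rightarrow> ('e \<Rightarrow> 'v) \<Rightarrow> 'e \<Rightarrow> ('v,'e) gis" where
  "gis_edge src rng e = PQ (src e, [e]) (rng e, [])"

definition gis_edge_inv :: "('e \<Rightarrow> 'v) \<Rightarrow> ('e \<Rightarrow> 'v) \<Rightarrow> 'e \<Rightarrow> ('v,'e) gis" where
  "gis_edge_inv src rng e = PQ (rng e, []) (src e, [e])"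

inductive_set gis_gen :: "'v set \<Rightarrow> 'e set \<Rightarrow> ('e \<Rightarrow> 'v) \<Rightarrow> ('e \<Rightarrow> 'v) \<Rightarrow> ('v,'e) gis set"
  for T0 T1 src rng where
  zero: "Zero \<in> gis_gen T0 T1 src rng"
| vert: "v \<in> T0 \<Longrightarrow> gis_vertex v \<in> gis_gen T0 T1 src rng"
| edge: "e \<in> T1 \<Longrightarrow> gis_edge src rng e \<in> gis_gen T0 T1 src rng"
| einv: "e \<in> T1 \<Longrightarrow> gis_edge_inv src rng e \<in> gis_gen T0 T1 src rng"
| mult: "x \<in> gis_gen T0 T1 src rng \<Longrightarrow> y \<in> gis_gen T0 T1 src rng \<Longrightarrow>
         gis_mult x y \<in> gis_gen T0 T1 src rng"

definition idempotents :: "('v,'e) gis set \<Rightarrow> ('v,'e) gis set" where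
  "idempotents S = {x \<in> S. gis_mult x x = x}"

definition gis_le :: "('v,'e) gis \<Rightarrow> ('v,'e) gis \<Rightarrow> bool" where
  "gis_le e f \<longleftrightarrow> e = gis_mult e f \<and> e = gis_mult f e"

definition is_chain :: "('v,'e) gis set \<Rightarrow> bool" where
  "is_chain C \<longleftrightarrow> (\<forall>x\<in>C. \<forall>y\<in>C. gis_le x y \<or> gis_le y x)"

definition unary_tree_subgraph ::
  "'v set \<Rightarrow> 'e set \<Rightarrow> ('e \<Rightarrow> 'v) \<Rightarrow> ('e \<Rightarrow> 'v) \<Rightarrow> 'v set \<Rightarrow> 'e set \<Rightarrow> bool" where
  "unary_tree_subgraph V Ed src rng T0 T1 \<longleftrightarrow>
     T0 \<subseteq> V \<and> T1 \<subseteq> Ed \<and>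
     (\<exists>vf :: nat \<Rightarrow> 'v. \<exists>ef :: nat \<Rightarrow> 'e.
        inj vf \<and> inj ef \<and> T0 = range vf \<and> T1 = range ef \<and>
        (\<forall>n. src (ef n) = vf n \<and> rng (ef n) = vf (Suc n)))"

end

theory Submission
  imports Defs
begin

lemma idem_char: "x \<in> idempotents (gis_carrier V Ed src rng) \<Longrightarrow> x = Zero \<or> (\<exists>p. x = PQ p p \<and> is_path V Ed src rng p)"
  unfolding idempotents_def gis_carrier_def
  by (auto split: if_splits simp: prefix_def)

lemma le_char: "gis_le (PQ p p) (PQ q q) \<Longrightarrow> fst p = fst q \<and> prefix (snd q) (snd p)"
  unfolding gis_le_def by (auto split: if_splits)

lemma prefix_nth_eq: "prefix xs ys \<Longrightarrow> i < length xs \<Longrightarrow> xs ! i = ys ! i"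
  by (auto simp: prefix_def nth_append)

lemma gen_paths:
  assumes "\<And>n. src (ef n) = vf n" "\<And>n. rng (ef n) = vf (Suc n)"
  shows "PQ (vf 0, map ef [0..<n]) (vf n, []) \<in> gis_gen (range vf) (range ef) src rng \<and>
         PQ (vf n, []) (vf 0, map ef [0..<n]) \<in> gis_gen (range vf) (range ef) src rng"
proof (induction n)
  case 0
  then show ?case using gis_gen.vert[of "vf 0" "range vf" "range ef" src rng]
    by (simp add: gis_vertex_def)
next
  case (Suc n)
  have e1: "gis_edge src rng (ef n) \<in> gis_gen (range vf) (range ef) src rng"
    by (rule gis_gen.edge) simp
  have e2: "gis_edge_inv src rng (ef n) \<in> gis_gen (range vf) (range ef) src rng"
    by (rule gis_gen.einv) simp
  have "gis_mult (PQ (vf 0, map ef [0..<n]) (vf n, [])) (gis_edge src rng (ef n))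
      = PQ (vf 0, map ef [0..<Suc n]) (vf (Suc n), [])"
    using assms by (simp add: gis_edge_def)
  moreover have "gis_mult (gis_edge_inv src rng (ef n)) (PQ (vf n, []) (vf 0, map ef [0..<n]))
      = PQ (vf (Suc n), []) (vf 0, map ef [0..<Suc n])"
    using assms by (simp add: gis_edge_inv_def)
  ultimately show ?case using Suc e1 e2 gis_gen.mult by metis
qed

theorem lemma4p4:
  fixes V :: "'v set" and Ed :: "'e set" and src rng :: "'e \<Rightarrow> 'v"
    and C :: "('v,'e) gis set"
  assumes "graph V Ed src rng"
    and "acyclic_graph V Ed src rng"
    and "C \<subseteq> idempotents (gis_carrier V Ed src rng)"
    and "is_chain C"
    and "infinite C"
  shows "\<exists>T0 T1. unary_tree_subgraph V Ed src rng T0 T1 \<and>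
                 C \<subseteq> idempotents (gis_gen T0 T1 src rng)"
proof -
  define Cp where "Cp = {p. PQ p p \<in> C}"
  have Cp_path: "is_path V Ed src rng p" if "p \<in> Cp" for p
  proof -
    have "PQ p p \<in> idempotents (gis_carrier V Ed src rng)"
      using that assms(3) unfolding Cp_def by blast
    from idem_char[OF this] show ?thesis by auto
  qed
  have Csub: "C \<subseteq> insert Zero ((\<lambda>p. PQ p p) ` Cp)"
  proof
    fix x assume x: "x \<in> C"
    then have "x \<in> idempotents (gis_carrier V Ed src rng)" using assms(3) by blast
    from idem_char[OF this] show "x \<in> insert Zero ((\<lambda>p. PQ p p) ` Cp)"
      using x unfolding Cp_def by auto
  qed
  have comp: "fst p = fst q \<and> (prefix (snd p) (snd q) \<or> prefix (snd q) (snd p))"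
    if "p \<in> Cp" "q \<in> Cp" for p q
  proof -
    have "gis_le (PQ p p) (PQ q q) \<or> gis_le (PQ q q) (PQ p p)"
      using assms(4) that unfolding Cp_def is_chain_def by blast
    then show ?thesis
    proof
      assume "gis_le (PQ p p) (PQ q q)"
      from le_char[OF this] show ?thesis by simp
    next
      assume "gis_le (PQ q q) (PQ p p)"
      from le_char[OF this] show ?thesis by simp
    qed
  qed
  have infCp: "infinite Cp"
  proof
    assume "finite Cp"
    then have "finite (insert Zero ((\<lambda>p. PQ p p) ` Cp))" by simp
    then show False using assms(5) Csub finite_subset by blast
  qed
  have injl: "inj_on (\<lambda>p. length (snd p)) Cp"
  proof (rule inj_onI)
    fix p q assume pq: "p \<in> Cp" "q \<in> Cp" "length (snd p) = length (snd q)"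
    have "snd p = snd q" using comp[OF pq(1,2)] pq(3)
      by (auto simp: prefix_def)
    then show "p = q" using comp[OF pq(1,2)] by (simp add: prod_eq_iff)
  qed
  have unb: "\<exists>p\<in>Cp. n < length (snd p)" for n
  proof (rule ccontr)
    assume "\<not> ?thesis"
    then have "(\<lambda>p. length (snd p)) ` Cp \<subseteq> {..n}" by force
    then have "finite ((\<lambda>p. length (snd p)) ` Cp)" using finite_subset by blast
    then show False using infCp injl finite_image_iff by blast
  qed
  define ef where "ef n = snd (SOME p. p \<in> Cp \<and> n < length (snd p)) ! n" for n
  have efp: "snd p ! i = ef i" if "p \<in> Cp" "i < length (snd p)" for p i
  proof -
    define q where "q = (SOME p. p \<in> Cp \<and> i < length (snd p))"
    have q: "q \<in> Cp \<and> i < length (snd q)" unfolding q_def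
      using unb[of i] by (metis (mono_tags, lifting) someI_ex)
    have "ef i = snd q ! i" unfolding ef_def q_def by simp
    then show ?thesis using comp[OF that(1) conjunct1[OF q]] q that(2) prefix_nth_eq by metis
  qed
  obtain p0 where p0: "p0 \<in> Cp" using infCp by (metis finite.emptyI ex_in_conv)
  define v where "v = fst p0"
  have fstv: "fst p = v" if "p \<in> Cp" for p using comp[OF that p0] v_def by simp
  have sndp: "snd p = map ef [0..<length (snd p)]" if "p \<in> Cp" for p
    by (rule nth_equalityI) (auto simp: efp[OF that])
  have efEd: "ef n \<in> Ed" for n
  proof -
    obtain p where p: "p \<in> Cp" "n < length (snd p)" using unb by blast
    then show ?thesis using Cp_path[OF p(1)] efp[OF p] unfolding is_path_def
      by (metis nth_mem subsetD)
  qed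
  define vf where "vf n = src (ef n)" for n
  have vfV: "vf n \<in> V" for n using assms(1) efEd unfolding graph_def vf_def by blast
  have conn: "rng (ef n) = vf (Suc n)" for n
  proof -
    obtain p where p: "p \<in> Cp" "Suc n < length (snd p)" using unb by blast
    then show ?thesis using Cp_path[OF p(1)] efp[OF p(1)] unfolding is_path_def vf_def
      by (metis Suc_lessD)
  qed
  have vf0: "vf 0 = v"
  proof -
    obtain p where p: "p \<in> Cp" "0 < length (snd p)" using unb by blast
    then have "snd p \<noteq> []" by auto
    then show ?thesis using Cp_path[OF p(1)] efp[OF p] fstv[OF p(1)] unfolding is_path_def vf_def
      by (metis hd_conv_nth)
  qed
  have noteq: "vf i \<noteq> vf j" if "i < j" for i j
  proof -
    define q where "q = (vf i, map ef [i..<j])"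
    have "is_path V Ed src rng q"
      unfolding is_path_def q_def using that vfV efEd conn
      by (auto simp: hd_map vf_def)
    moreover have "snd q \<noteq> []" using that by (simp add: q_def)
    ultimately have "fst q \<noteq> path_rng rng q" using assms(2) unfolding acyclic_graph_def by blast
    moreover have "path_rng rng q = vf j" using that conn unfolding path_rng_def q_def
      by (simp add: last_map)
    ultimately show ?thesis by (simp add: q_def)
  qed
  have injvf: "inj vf"
    by (rule injI) (metis noteq linorder_neqE_nat)
  have injef: "inj ef"
    by (rule injI) (metis conn injvf injD nat.inject)
  have ut: "unary_tree_subgraph V Ed src rng (range vf) (range ef)"
    unfolding unary_tree_subgraph_def
  proof (intro conjI exI)
    show "range vf \<subseteq> V" using vfV by blast
    show "range ef \<subseteq> Ed" using efEd by blast
    show "\<forall>n. src (ef n) = vf n \<and> rng (ef n) = vf (Suc n)" using conn vf_def by simp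
  qed (use injvf injef in auto)
  have "C \<subseteq> idempotents (gis_gen (range vf) (range ef) src rng)"
  proof
    fix x assume x: "x \<in> C"
    then consider "x = Zero" | p where "p \<in> Cp" "x = PQ p p" using Csub by blast
    then show "x \<in> idempotents (gis_gen (range vf) (range ef) src rng)"
    proof cases
      case 1
      then show ?thesis by (simp add: idempotents_def gis_gen.zero)
    next
      case 2
      define n where "n = length (snd p)"
      have pe: "p = (vf 0, map ef [0..<n])"
        using sndp[OF 2(1)] fstv[OF 2(1)] vf0 n_def by (metis prod.collapse)
      have g: "PQ (vf 0, map ef [0..<n]) (vf n, []) \<in> gis_gen (range vf) (range ef) src rng \<and>
         PQ (vf n, []) (vf 0, map ef [0..<n]) \<in> gis_gen (range vf) (range ef) src rng"
        by (rule gen_paths) (auto simp: vf_def conn)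
      have "gis_mult (PQ (vf 0, map ef [0..<n]) (vf n, [])) (PQ (vf n, []) (vf 0, map ef [0..<n])) = x"
        using 2 pe by simp
      then have "x \<in> gis_gen (range vf) (range ef) src rng" using g gis_gen.mult by metis
      moreover have "gis_mult x x = x" using 2 by simp
      ultimately show ?thesis by (simp add: idempotents_def)
    qed
  qed
  then show ?thesis using ut by blast
qed

end
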